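(* For any integers $n \geq 3$ and $m \geq 1$, $\chi_\rho(FSSD_m(K_n)) = n+1$.
   Context: All graphs are finite and simple. For a positive integer $i$, an $i$-packing in a graph $G$ is a set of vertices any two distinct members of which are at distance greater than $i$. The packing chromatic number $\chi_\rho(G)$ is the smallest integer $k$ such that $V(G)$ can be partitioned into sets $V_1,\dots,V_k$ with each $V_i$ an $i$-packing. For a positive integer $m$, $FSSD_m(G)$ is obtained from $G$ by replacing each edge $uv$ of $G$ by a copy of $K_{2,m}$: the edge $uv$ is deleted and $m$ new vertices are added, each adjacent to exactly $u$ and $v$. $K_n$ is the complete graph on $n$ vertices. *)

theory Defs
  imports Main "HOL-Library.Extended_Nat"
begin

text \<open>A finite simple graph is given by a vertex set V and a symmetric,
irreflexive adjacency relation E (only its restriction to V matters).\<close>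

fun reach_within :: "'a set \<Rightarrow> ('a \<Rightarrow> 'a \<Rightarrow> bool) \<Rightarrow> nat \<Rightarrow> 'a \<Rightarrow> 'a \<Rightarrow> bool" where
  "reach_within V E 0 u v = (u = v \<and> u \<in> V)"
| "reach_within V E (Suc k) u v =
     (reach_within V E k u v \<or> (\<exists>w\<in>V. reach_within V E k u w \<and> E w v \<and> v \<in> V))"

definition gdist :: "'a set \<Rightarrow> ('a \<Rightarrow> 'a \<Rightarrow> bool) \<Rightarrow> 'a \<Rightarrow> 'a \<Rightarrow> enat" where
  "gdist V E u v = (if \<exists>k. reach_within V E k u v
                    then enat (LEAST k. reach_within V E k u v) else \<infinity>)"

definition is_packing :: "'a set \<Rightarrow> ('a \<Rightarrow> 'a \<Rightarrow> bool) \<Rightarrow> nat \<Rightarrow> 'a set \<Rightarrow> bool" where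
  "is_packing V E i S = (S \<subseteq> V \<and>
     (\<forall>u\<in>S. \<forall>v\<in>S. u \<noteq> v \<longrightarrow> gdist V E u v > enat i))"

definition packing_chromatic :: "'a set \<Rightarrow> ('a \<Rightarrow> 'a \<Rightarrow> bool) \<Rightarrow> nat" where
  "packing_chromatic V E = (LEAST k. \<exists>c. (\<forall>v\<in>V. c v \<in> {1..k}) \<and>
       (\<forall>i\<in>{1..k}. is_packing V E i {v\<in>V. c v = i}))"

definition K_verts :: "nat \<Rightarrow> nat set" where
  "K_verts n = {..<n}"

definition K_adj :: "nat \<Rightarrow> nat \<Rightarrow> nat \<Rightarrow> bool" where
  "K_adj n u v = (u < n \<and> v < n \<and> u \<noteq> v)"

text \<open>FSSD_m(G): every edge uv (an unordered pair {u,v}) is replaced by m new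
 vertices Inr ({u,v}, t), t < m, each adjacent exactly to u and v; the original
 vertices are Inl u and the original edges are deleted.\<close>
definition fssd_verts :: "'a set \<Rightarrow> ('a \<Rightarrow> 'a \<Rightarrow> bool) \<Rightarrow> nat \<Rightarrow> ('a + ('a set \<times> nat)) set" where
  "fssd_verts V E m = Inl ` V \<union>
     {Inr (e, t) | e t. t < m \<and> (\<exists>u\<in>V. \<exists>v\<in>V. E u v \<and> e = {u, v})}"

definition fssd_adj :: "'a set \<Rightarrow> ('a \<Rightarrow> 'a \<Rightarrow> bool) \<Rightarrow> nat \<Rightarrow>
     ('a + ('a set \<times> nat)) \<Rightarrow> ('a + ('a set \<times> nat)) \<Rightarrow> bool" where
  "fssd_adj V E m x y = (x \<in> fssd_verts V E m \<and> y \<in> fssd_verts V E m \<and>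
     (case (x, y) of
        (Inl u, Inr (e, t)) \<Rightarrow> u \<in> e
      | (Inr (e, t), Inl u) \<Rightarrow> u \<in> e
      | _ \<Rightarrow> False))"

end

theory Submission imports Defs begin

lemma rw_mono: "reach_within V E k x y \<Longrightarrow> k \<le> k' \<Longrightarrow> reach_within V E k' x y"
proof (induction k')
  case 0 then show ?case by auto
next
  case (Suc k') then show ?case by (auto simp: le_Suc_eq)
qed

lemma rw_trans0: "reach_within V E a x y \<Longrightarrow> reach_within V E b y z \<Longrightarrow> reach_within V E (a+b) x z"
proof (induction b arbitrary: z)
  case 0 then show ?case by simp
next
  case (Suc b) then show ?case by auto
qed

lemma rw_trans: "reach_within V E a x y \<Longrightarrow> reach_within V E b y z \<Longrightarrow> a + b = c \<Longrightarrow> reach_within V E c x z"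
  using rw_trans0[of V E a x y b z] by simp

lemma rw_edge: "x \<in> V \<Longrightarrow> y \<in> V \<Longrightarrow> E x y \<Longrightarrow> reach_within V E 1 x y"
  by simp

lemma gdist_gt_iff: "gdist V E x y > enat i \<longleftrightarrow> \<not> reach_within V E i x y"
proof
  assume g: "gdist V E x y > enat i"
  show "\<not> reach_within V E i x y"
  proof
    assume r: "reach_within V E i x y"
    then have "(LEAST k. reach_within V E k x y) \<le> i" by (rule Least_le)
    moreover have "gdist V E x y = enat (LEAST k. reach_within V E k x y)"
      using r unfolding gdist_def by auto
    ultimately show False using g by simp
  qed
next
  assume n: "\<not> reach_within V E i x y"
  show "gdist V E x y > enat i"
  proof (cases "\<exists>k. reach_within V E k x y")
    case True
    then have r: "reach_within V E (LEAST k. reach_within V E k x y) x y" by (rule LeastI_ex)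
    have "\<not> (LEAST k. reach_within V E k x y) \<le> i"
      using rw_mono[OF r] n by blast
    then show ?thesis using True unfolding gdist_def by auto
  next
    case False then show ?thesis unfolding gdist_def by auto
  qed
qed

lemma rw_refl: "x \<in> V \<Longrightarrow> reach_within V E 0 x x" by simp

declare reach_within.simps[simp del]

definition "GV n m = fssd_verts (K_verts n) (K_adj n) m"
definition "GE n m = fssd_adj (K_verts n) (K_adj n) m"

abbreviation "RW n m k \<equiv> reach_within (GV n m) (GE n m) k"

lemma inl_in[simp]: "Inl a \<in> GV n m \<longleftrightarrow> a < n"
  by (auto simp: GV_def fssd_verts_def K_verts_def)

lemma inr_in: "a < n \<Longrightarrow> b < n \<Longrightarrow> a \<noteq> b \<Longrightarrow> t < m \<Longrightarrow> Inr ({a,b},t) \<in> GV n m"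
  unfolding GV_def fssd_verts_def K_verts_def K_adj_def by blast

lemma GV_cases: "x \<in> GV n m \<Longrightarrow> (\<exists>a<n. x = Inl a) \<or> (\<exists>a b t. a<n \<and> b<n \<and> a\<noteq>b \<and> t<m \<and> x = Inr({a,b},t))"
  unfolding GV_def fssd_verts_def K_verts_def K_adj_def by blast

lemma adj1: "a < n \<Longrightarrow> b < n \<Longrightarrow> a \<noteq> b \<Longrightarrow> t < m \<Longrightarrow> p \<in> {a,b} \<Longrightarrow> GE n m (Inl p) (Inr ({a,b},t))"
  using inr_in[of a n b t m] by (auto simp: GE_def fssd_adj_def GV_def[symmetric])

lemma adj2: "a < n \<Longrightarrow> b < n \<Longrightarrow> a \<noteq> b \<Longrightarrow> t < m \<Longrightarrow> p \<in> {a,b} \<Longrightarrow> GE n m (Inr ({a,b},t)) (Inl p)"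
  using inr_in[of a n b t m] by (auto simp: GE_def fssd_adj_def GV_def[symmetric])

lemma GE_inr_inr: "\<not> GE n m (Inr x) (Inr y)"
  by (auto simp: GE_def fssd_adj_def split: prod.splits)

lemma rw1_lr: "a < n \<Longrightarrow> b < n \<Longrightarrow> a \<noteq> b \<Longrightarrow> t < m \<Longrightarrow> p \<in> {a,b} \<Longrightarrow> RW n m 1 (Inl p) (Inr ({a,b},t))"
  apply (rule rw_edge) using inr_in adj1 by auto

lemma rw1_rl: "a < n \<Longrightarrow> b < n \<Longrightarrow> a \<noteq> b \<Longrightarrow> t < m \<Longrightarrow> p \<in> {a,b} \<Longrightarrow> RW n m 1 (Inr ({a,b},t)) (Inl p)"
  apply (rule rw_edge) using inr_in adj2 by auto

lemma L_ll: "a < n \<Longrightarrow> b < n \<Longrightarrow> a \<noteq> b \<Longrightarrow> 1 \<le> m \<Longrightarrow> RW n m 2 (Inl a) (Inl b)"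
  by (rule rw_trans[OF rw1_lr[of a n b 0 m a] rw1_rl[of a n b 0 m b]]) auto

lemma L_rr: "a < n \<Longrightarrow> b < n \<Longrightarrow> a \<noteq> b \<Longrightarrow> t < m \<Longrightarrow> c < n \<Longrightarrow> d < n \<Longrightarrow> c \<noteq> d \<Longrightarrow> s < m
  \<Longrightarrow> p \<in> {a,b} \<Longrightarrow> p \<in> {c,d} \<Longrightarrow> RW n m 2 (Inr ({a,b},t)) (Inr ({c,d},s))"
  by (rule rw_trans[OF rw1_rl[of a n b t m p] rw1_lr[of c n d s m p]]) auto

lemma L_lr: assumes "w < n" "a < n" "b < n" "a \<noteq> b" "t < m" "1 \<le> m"
  shows "RW n m 3 (Inl w) (Inr ({a,b},t))"
proof (cases "w \<in> {a,b}")
  case True then show ?thesis by (intro rw_mono[OF rw1_lr[of a n b t m w]]) (use assms in auto)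
next
  case False
  have 1: "RW n m 2 (Inl w) (Inl a)" using L_ll[of w n a m] assms False by auto
  show ?thesis by (rule rw_trans[OF 1 rw1_lr[of a n b t m a]]) (use assms in auto)
qed

lemma L_rl: assumes "w < n" "a < n" "b < n" "a \<noteq> b" "t < m" "1 \<le> m"
  shows "RW n m 3 (Inr ({a,b},t)) (Inl w)"
proof (cases "w \<in> {a,b}")
  case True then show ?thesis by (intro rw_mono[OF rw1_rl[of a n b t m w]]) (use assms in auto)
next
  case False
  have 1: "RW n m 2 (Inl a) (Inl w)" using L_ll[of a n w m] assms False by auto
  show ?thesis by (rule rw_trans[OF rw1_rl[of a n b t m a] 1]) (use assms in auto)
qed

lemma L_all: assumes "x \<in> GV n m" "y \<in> GV n m" "1 \<le> m" shows "RW n m 4 x y"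
proof -
  from GV_cases[OF assms(1)] GV_cases[OF assms(2)] show ?thesis
  proof (elim disjE exE conjE)
    fix a b assume h: "a < n" "x = Inl a" "b < n" "y = Inl b"
    show ?thesis
    proof (cases "a = b")
      case True
      have "RW n m 0 x y" using h True by (simp add: rw_refl)
      then show ?thesis by (rule rw_mono) simp
    next
      case False
      have "RW n m 2 x y" using h False assms(3) L_ll by simp
      then show ?thesis by (rule rw_mono) simp
    qed
  next
    fix a c d s assume h: "a < n" "x = Inl a" "c<n" "d<n" "c\<noteq>d" "s<m" "y = Inr ({c,d},s)"
    have "RW n m 3 x y" using h assms(3) L_lr by simp
    then show ?thesis by (rule rw_mono) simp
  next
    fix a c d s assume h: "a < n" "y = Inl a" "c<n" "d<n" "c\<noteq>d" "s<m" "x = Inr ({c,d},s)"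
    have "RW n m 3 x y" using h assms(3) L_rl by simp
    then show ?thesis by (rule rw_mono) simp
  next
    fix a b t c d s assume h: "a<n" "b<n" "a\<noteq>b" "t<m" "x = Inr ({a,b},t)"
      "c<n" "d<n" "c\<noteq>d" "s<m" "y = Inr ({c,d},s)"
    have 1: "RW n m 1 x (Inl a)" using h rw1_rl by simp
    have 2: "RW n m 3 (Inl a) y" using h assms(3) L_lr by simp
    show ?thesis by (rule rw_trans[OF 1 2]) simp
  qed
qed

abbreviation R :: "nat \<Rightarrow> nat \<Rightarrow> nat + nat set \<times> nat" where "R a b \<equiv> Inr ({a,b}, 0)"

lemma inj_R: "inj_on (R a) X"
  by (auto simp: inj_on_def doubleton_eq_iff)

lemma card_R: "card (R a ` X) = card X"
  by (rule card_image[OF inj_R])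

lemma R_eq: "a \<noteq> c \<Longrightarrow> b \<noteq> a \<Longrightarrow> d \<noteq> a \<Longrightarrow> R a b \<noteq> R c d"
  by (auto simp: doubleton_eq_iff)

lemma RR2: "1 \<le> m \<Longrightarrow> a<n \<Longrightarrow> b<n \<Longrightarrow> a\<noteq>b \<Longrightarrow> c<n \<Longrightarrow> d<n \<Longrightarrow> c\<noteq>d \<Longrightarrow> p\<in>{a,b} \<Longrightarrow> p\<in>{c,d}
   \<Longrightarrow> RW n m 2 (R a b) (R c d)"
  by (rule L_rr) auto

definition "pw n m i Y = (\<forall>x\<in>Y. \<forall>y\<in>Y. x \<noteq> y \<longrightarrow> RW n m i x y)"

lemma pw_mono: "pw n m i Y \<Longrightarrow> i \<le> j \<Longrightarrow> pw n m j Y"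
  unfolding pw_def by (meson rw_mono)

locale colr =
  fixes n m k :: nat and c :: "nat + nat set \<times> nat \<Rightarrow> nat"
  assumes n3: "n \<ge> 3" and m1: "m \<ge> 1"
    and col: "\<forall>v\<in>GV n m. c v \<in> {1..k}"
    and pack: "\<forall>i\<in>{1..k}. is_packing (GV n m) (GE n m) i {v\<in>GV n m. c v = i}"
begin

lemma conflict: assumes "x \<in> GV n m" "y \<in> GV n m" "x \<noteq> y" "c x = c y" "RW n m j x y" "j \<le> c x"
  shows False
proof -
  have i: "c x \<in> {1..k}" using col assms(1) by auto
  then have "is_packing (GV n m) (GE n m) (c x) {v\<in>GV n m. c v = c x}" using pack by auto
  then have "gdist (GV n m) (GE n m) x y > enat (c x)"
    unfolding is_packing_def using assms by auto
  then have "\<not> RW n m (c x) x y" by (simp add: gdist_gt_iff)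
  then show False using rw_mono[OF assms(5) assms(6)] by simp
qed

lemma sub1: assumes "finite Y" "Y \<subseteq> GV n m" "pw n m i Y"
  shows "card {x\<in>Y. c x = i} \<le> 1"
proof -
  have "\<forall>a\<in>{x\<in>Y. c x = i}. \<forall>b\<in>{x\<in>Y. c x = i}. a = b"
  proof (intro ballI)
    fix a b assume a: "a \<in> {x\<in>Y. c x = i}" and b: "b \<in> {x\<in>Y. c x = i}"
    show "a = b"
    proof (rule ccontr)
      assume "a \<noteq> b"
      then have "RW n m i a b" using assms(3) a b unfolding pw_def by auto
      then show False using conflict[of a b i] a b assms(2) \<open>a \<noteq> b\<close> by auto
    qed
  qed
  then show ?thesis using assms(1) by (simp add: card_le_Suc0_iff_eq)
qed

lemma sub2: assumes "finite Y1" "Y1 \<subseteq> GV n m" "pw n m i Y1" "finite Y2" "Y2 \<subseteq> GV n m" "pw n m i Y2"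
  shows "card {x\<in>Y1 \<union> Y2. c x = i} \<le> 2"
proof -
  have "{x\<in>Y1 \<union> Y2. c x = i} = {x\<in>Y1. c x = i} \<union> {x\<in>Y2. c x = i}" by auto
  then have "card {x\<in>Y1 \<union> Y2. c x = i} \<le> card {x\<in>Y1. c x = i} + card {x\<in>Y2. c x = i}"
    by (simp add: card_Un_le)
  then show ?thesis using sub1[OF assms(1-3)] sub1[OF assms(4-6)] by simp
qed

lemma CL: assumes "finite S" "S \<subseteq> GV n m" "\<forall>x\<in>S. c x \<noteq> 1"
  shows "card S \<le> card {x\<in>S. c x = 2} + card {x\<in>S. c x = 3} + (k - 3)"
proof -
  define S4 where "S4 = {x\<in>S. c x \<ge> 4}"
  have cov: "S = {x\<in>S. c x = 2} \<union> {x\<in>S. c x = 3} \<union> S4"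
  proof -
    have "\<And>x. x \<in> S \<Longrightarrow> c x \<noteq> 1 \<and> c x \<ge> 1" using assms col by fastforce
    then show ?thesis unfolding S4_def by force
  qed
  have "inj_on c S4"
  proof (rule inj_onI)
    fix x y assume x: "x \<in> S4" and y: "y \<in> S4" and e: "c x = c y"
    show "x = y"
    proof (rule ccontr)
      assume ne: "x \<noteq> y"
      have "RW n m 4 x y" using L_all[OF _ _ m1] x y assms(2) unfolding S4_def by auto
      then show False using conflict[of x y 4] x y assms(2) ne e unfolding S4_def by auto
    qed
  qed
  then have "card S4 = card (c ` S4)" by (simp add: card_image)
  also have "\<dots> \<le> card {4..k}"
    by (rule card_mono) (use col assms(2) in \<open>auto simp: S4_def\<close>)
  finally have c4: "card S4 \<le> k - 3" by simp
  have "card S \<le> card ({x\<in>S. c x = 2} \<union> {x\<in>S. c x = 3}) + card S4"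
    by (subst cov) (rule card_Un_le)
  also have "\<dots> \<le> card {x\<in>S. c x = 2} + card {x\<in>S. c x = 3} + card S4"
    using card_Un_le by simp
  finally show ?thesis using c4 by simp
qed

lemma star_sub: assumes "u < n" "X \<subseteq> {..<n} - {u}" shows "R u ` X \<subseteq> GV n m"
proof
  fix x assume "x \<in> R u ` X"
  then obtain b where "b \<in> X" "x = R u b" by auto
  then show "x \<in> GV n m" using inr_in[of u n b 0 m] assms m1 by auto
qed

lemma star_pw: assumes "u < n" "X \<subseteq> {..<n} - {u}" shows "pw n m 2 (R u ` X)"
  unfolding pw_def
proof (intro ballI impI)
  fix x y assume "x \<in> R u ` X" "y \<in> R u ` X" "x \<noteq> y"
  then obtain a b where "a \<in> X" "x = R u a" "b \<in> X" "y = R u b" by auto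
  then show "RW n m 2 x y" using RR2[OF m1, of u n a u b u] assms by auto
qed

lemma inl_sub: "X \<subseteq> {..<n} \<Longrightarrow> (Inl ` X :: (nat + nat set \<times> nat) set) \<subseteq> GV n m"
  by auto

lemma inl_pw: "X \<subseteq> {..<n} \<Longrightarrow> pw n m 2 (Inl ` X :: (nat + nat set \<times> nat) set)"
  unfolding pw_def
proof (intro ballI impI)
  fix x y :: "nat + nat set \<times> nat" assume "X \<subseteq> {..<n}" "x \<in> Inl ` X" "y \<in> Inl ` X" "x \<noteq> y"
  then obtain a b where "a \<in> X" "x = Inl a" "b \<in> X" "y = Inl b" by auto
  then show "RW n m 2 x y" using L_ll[OF _ _ _ m1, of a n b] \<open>X \<subseteq> {..<n}\<close> \<open>x \<noteq> y\<close> by auto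
qed

lemma nonone: assumes "c (Inl u) = 1" "u < n" "x < n" "x \<noteq> u" shows "c (R u x) \<noteq> 1"
proof
  assume h: "c (R u x) = 1"
  have "RW n m 1 (R u x) (Inl u)" by (rule rw1_rl) (use assms m1 in auto)
  then show False using conflict[of "R u x" "Inl u" 1] assms h inr_in m1 by auto
qed

lemma caseI: assumes "\<forall>a<n. c (Inl a) \<noteq> 1" shows "n + 1 \<le> k"
proof -
  let ?S = "Inl ` {..<n} :: (nat + nat set \<times> nat) set"
  have f: "finite ?S" by simp
  have s: "?S \<subseteq> GV n m" by (rule inl_sub) simp
  have p2: "pw n m 2 ?S" by (rule inl_pw) simp
  have p3: "pw n m 3 ?S" by (rule pw_mono[OF p2]) simp
  have "card ?S \<le> card {x\<in>?S. c x = 2} + card {x\<in>?S. c x = 3} + (k - 3)"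
    by (rule CL[OF f s]) (use assms in auto)
  moreover have "card ?S = n" by (simp add: card_image)
  ultimately show ?thesis using sub1[OF f s p2] sub1[OF f s p3] n3 by linarith
qed

lemma pw_Un: assumes "pw n m i A" "pw n m i B" "\<And>a b. a \<in> A \<Longrightarrow> b \<in> B \<Longrightarrow> RW n m i a b \<and> RW n m i b a"
  shows "pw n m i (A \<union> B)"
  using assms unfolding pw_def by blast

lemma card_X: "u < n \<Longrightarrow> card ({..<n} - {u}) = n - 1"
  by (simp add: card_Diff_singleton)

lemma card_Y: "u < n \<Longrightarrow> v < n \<Longrightarrow> u \<noteq> v \<Longrightarrow> card ({..<n} - {u,v}) = n - 2"
  by (subst card_Diff_subset) auto

lemma card_Z: "u < n \<Longrightarrow> v < n \<Longrightarrow> w < n \<Longrightarrow> u \<noteq> v \<Longrightarrow> u \<noteq> w \<Longrightarrow> v \<noteq> w \<Longrightarrow> card ({..<n} - {u,v,w}) = n - 3"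
  by (subst card_Diff_subset) auto

lemma caseII: assumes u: "u < n" "c (Inl u) = 1" and L: "2 \<le> card {x\<in>{..<n} - {u}. c (Inl x) \<noteq> 1}"
  shows "n + 1 \<le> k"
proof -
  define Lu where "Lu = {x\<in>{..<n} - {u}. c (Inl x) \<noteq> 1}"
  define St where "St = R u ` ({..<n} - {u})"
  define Sl where "Sl = (Inl ` Lu :: (nat + nat set \<times> nat) set)"
  have LuX: "Lu \<subseteq> {..<n}" unfolding Lu_def by auto
  have fSt: "finite St" and fSl: "finite Sl" unfolding St_def Sl_def Lu_def by auto
  have sSt: "St \<subseteq> GV n m" unfolding St_def by (rule star_sub[OF u(1)]) simp
  have sSl: "Sl \<subseteq> GV n m" unfolding Sl_def by (rule inl_sub[OF LuX])
  have pSt: "pw n m 2 St" unfolding St_def by (rule star_pw[OF u(1)]) simp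
  have pSl: "pw n m 2 Sl" unfolding Sl_def by (rule inl_pw[OF LuX])
  have cross: "RW n m 3 a b \<and> RW n m 3 b a" if "a \<in> St" "b \<in> Sl" for a b
  proof -
    from that obtain x y where "x < n" "x \<noteq> u" "a = R u x" "y \<in> Lu" "b = Inl y"
      unfolding St_def Sl_def by auto
    then show ?thesis using L_lr[OF _ u(1) _ _ _ m1, of y x 0] L_rl[OF _ u(1) _ _ _ m1, of y x 0] LuX
      m1 by auto
  qed
  have p3: "pw n m 3 (St \<union> Sl)"
    by (rule pw_Un[OF pw_mono[OF pSt] pw_mono[OF pSl]]) (use cross in auto)
  have non1: "\<forall>x\<in>St \<union> Sl. c x \<noteq> 1"
    unfolding St_def Sl_def Lu_def using nonone[OF u(2) u(1)] by auto
  have "card (St \<union> Sl) \<le> card {x\<in>St \<union> Sl. c x = 2} + card {x\<in>St \<union> Sl. c x = 3} + (k - 3)"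
    by (rule CL) (use fSt fSl sSt sSl non1 in auto)
  moreover have "card {x\<in>St \<union> Sl. c x = 2} \<le> 2" by (rule sub2[OF fSt sSt pSt fSl sSl pSl])
  moreover have "card {x\<in>St \<union> Sl. c x = 3} \<le> 1" by (rule sub1) (use fSt fSl sSt sSl p3 in auto)
  moreover have "card (St \<union> Sl) = card St + card Sl"
    by (rule card_Un_disjoint[OF fSt fSl]) (auto simp: St_def Sl_def)
  moreover have "card St = n - 1" unfolding St_def card_R using card_X[OF u(1)] .
  moreover have "card Sl = card Lu" unfolding Sl_def by (simp add: card_image)
  ultimately show ?thesis using L n3 unfolding Lu_def by linarith
qed

lemma caseIII: assumes u: "u < n" "c (Inl u) = 1" and L: "card {x\<in>{..<n} - {u}. c (Inl x) \<noteq> 1} \<le> 1"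
  shows "n + 1 \<le> k"
proof -
  define Lu where "Lu = {x\<in>{..<n} - {u}. c (Inl x) \<noteq> 1}"
  have fLu: "finite Lu" unfolding Lu_def by auto
  have "({..<n} - {u}) - Lu \<noteq> {}"
  proof
    assume "({..<n} - {u}) - Lu = {}"
    then have "card ({..<n} - {u}) \<le> card Lu" using fLu by (intro card_mono) auto
    then show False using card_X[OF u(1)] L n3 unfolding Lu_def by linarith
  qed
  then obtain v where v: "v < n" "v \<noteq> u" "c (Inl v) = 1" unfolding Lu_def by auto
  define St where "St = R u ` ({..<n} - {u})"
  define Sv where "Sv = R v ` ({..<n} - {u,v})"
  have fSt: "finite St" and fSv: "finite Sv" unfolding St_def Sv_def by auto
  have sSt: "St \<subseteq> GV n m" unfolding St_def by (rule star_sub[OF u(1)]) simp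
  have sSv: "Sv \<subseteq> GV n m" unfolding Sv_def by (rule star_sub[OF v(1)]) auto
  have pSt: "pw n m 2 St" unfolding St_def by (rule star_pw[OF u(1)]) simp
  have pSv: "pw n m 2 Sv" unfolding Sv_def by (rule star_pw[OF v(1)]) auto
  have n1St: "\<forall>x\<in>St. c x \<noteq> 1" unfolding St_def using nonone[OF u(2) u(1)] by auto
  have n1Sv: "\<forall>x\<in>Sv. c x \<noteq> 1" unfolding Sv_def using nonone[OF v(3) v(1)] by auto
  have cSt: "card St = n - 1" unfolding St_def card_R using card_X[OF u(1)] .
  have cSv: "card Sv = n - 2" unfolding Sv_def card_R using card_Y[OF u(1) v(1)] v(2) by auto
  have dis: "St \<inter> Sv = {}" unfolding St_def Sv_def using v(2) by (auto simp: doubleton_eq_iff)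
  have cU: "card (St \<union> Sv) = (n - 1) + (n - 2)"
    using card_Un_disjoint[OF fSt fSv dis] cSt cSv by simp
  consider "n = 3" | "n = 4" | "n \<ge> 5" using n3 by linarith
  then show ?thesis
  proof cases
    case 1
    have cross: "RW n m 2 a b \<and> RW n m 2 b a" if "a \<in> St" "b \<in> Sv" for a b
    proof -
      from that obtain x y where xy: "x < n" "x \<noteq> u" "a = R u x" "y < n" "y \<noteq> u" "y \<noteq> v" "b = R v y"
        unfolding St_def Sv_def by auto
      have "x = v \<or> x = y" using xy 1 u(1) v by linarith
      then show ?thesis
      proof
        assume "x = v" then show ?thesis
          using xy RR2[OF m1, of u n x v y v] RR2[OF m1, of v n y u x v] u(1) v by auto
      next
        assume "x = y" then show ?thesis
          using xy RR2[OF m1, of u n x v y y] RR2[OF m1, of v n y u x y] u(1) v by auto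
      qed
    qed
    have p2: "pw n m 2 (St \<union> Sv)" by (rule pw_Un[OF pSt pSv]) (use cross in auto)
    have fS: "finite (St \<union> Sv)" and sS: "St \<union> Sv \<subseteq> GV n m" using fSt fSv sSt sSv by auto
    have "card (St \<union> Sv) \<le> card {x\<in>St \<union> Sv. c x = 2} + card {x\<in>St \<union> Sv. c x = 3} + (k - 3)"
      by (rule CL[OF fS sS]) (use n1St n1Sv in auto)
    moreover have "card {x\<in>St \<union> Sv. c x = 2} \<le> 1" by (rule sub1[OF fS sS p2])
    moreover have "card {x\<in>St \<union> Sv. c x = 3} \<le> 1" by (rule sub1[OF fS sS pw_mono[OF p2]]) simp
    ultimately show ?thesis using cU 1 by linarith
  next
    case 2
    have "({..<n} - {u,v}) - Lu \<noteq> {}"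
    proof
      assume "({..<n} - {u,v}) - Lu = {}"
      then have "card ({..<n} - {u,v}) \<le> card Lu" using fLu by (intro card_mono) auto
      then show False using card_Y[OF u(1) v(1)] v(2) L 2 unfolding Lu_def by auto
    qed
    then obtain w where w: "w < n" "w \<noteq> u" "w \<noteq> v" "c (Inl w) = 1" unfolding Lu_def by auto
    define Sw where "Sw = R w ` ({..<n} - {u,v,w})"
    have fSw: "finite Sw" unfolding Sw_def by auto
    have sSw: "Sw \<subseteq> GV n m" unfolding Sw_def by (rule star_sub[OF w(1)]) auto
    have pSw: "pw n m 2 Sw" unfolding Sw_def by (rule star_pw[OF w(1)]) auto
    have n1Sw: "\<forall>x\<in>Sw. c x \<noteq> 1" unfolding Sw_def using nonone[OF w(4) w(1)] by auto
    have cSw: "card Sw = n - 3" unfolding Sw_def card_R using card_Z[OF u(1) v(1) w(1)] v(2) w by auto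
    have cross: "RW n m 2 a b \<and> RW n m 2 b a" if "a \<in> Sv" "b \<in> Sw" for a b
    proof -
      from that obtain x y where xy: "x < n" "x \<noteq> u" "x \<noteq> v" "a = R v x" "y < n" "y \<noteq> u" "y \<noteq> v" "y \<noteq> w" "b = R w y"
        unfolding Sv_def Sw_def by auto
      have "x = w \<or> x = y"
      proof (cases "x = w")
        case True then show ?thesis by simp
      next
        assume "x \<noteq> w"
        have "card ({..<n} - {u,v,w}) = 1" using card_Z[OF u(1) v(1) w(1)] v(2) w 2 by auto
        then obtain z where "{..<n} - {u,v,w} = {z}" by (rule card_1_singletonE)
        moreover have "x \<in> {..<n} - {u,v,w}" "y \<in> {..<n} - {u,v,w}" using xy \<open>x \<noteq> w\<close> by auto
        ultimately show ?thesis by auto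
      qed
      then show ?thesis
      proof
        assume "x = w" then show ?thesis
          using xy RR2[OF m1, of v n x w y w] RR2[OF m1, of w n y v x w] v w by auto
      next
        assume "x = y" then show ?thesis
          using xy RR2[OF m1, of v n x w y y] RR2[OF m1, of w n y v x y] v w by auto
      qed
    qed
    have p2: "pw n m 2 (Sv \<union> Sw)" by (rule pw_Un[OF pSv pSw]) (use cross in auto)
    have fS2: "finite (Sv \<union> Sw)" and sS2: "Sv \<union> Sw \<subseteq> GV n m" using fSv fSw sSv sSw by auto
    have dis2: "Sv \<inter> Sw = {}" unfolding Sv_def Sw_def using w by (auto simp: doubleton_eq_iff)
    have dis3: "St \<inter> (Sv \<union> Sw) = {}" using dis unfolding St_def Sw_def using w by (auto simp: doubleton_eq_iff)
    have cU2: "card (St \<union> (Sv \<union> Sw)) = (n - 1) + ((n - 2) + (n - 3))"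
      using card_Un_disjoint[OF fSt fS2 dis3] card_Un_disjoint[OF fSv fSw dis2] cSt cSv cSw by simp
    have fS: "finite (St \<union> (Sv \<union> Sw))" and sS: "St \<union> (Sv \<union> Sw) \<subseteq> GV n m" using fSt fS2 sSt sS2 by auto
    have "card (St \<union> (Sv \<union> Sw)) \<le> card {x\<in>St \<union> (Sv \<union> Sw). c x = 2} + card {x\<in>St \<union> (Sv \<union> Sw). c x = 3} + (k - 3)"
      by (rule CL[OF fS sS]) (use n1St n1Sv n1Sw in auto)
    moreover have "card {x\<in>St \<union> (Sv \<union> Sw). c x = 2} \<le> 2" by (rule sub2[OF fSt sSt pSt fS2 sS2 p2])
    moreover have "card {x\<in>St \<union> (Sv \<union> Sw). c x = 3} \<le> 2"
      by (rule sub2[OF fSt sSt pw_mono[OF pSt] fS2 sS2 pw_mono[OF p2]]) simp_all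
    ultimately show ?thesis using cU2 2 by linarith
  next
    case 3
    have fS: "finite (St \<union> Sv)" and sS: "St \<union> Sv \<subseteq> GV n m" using fSt fSv sSt sSv by auto
    have "card (St \<union> Sv) \<le> card {x\<in>St \<union> Sv. c x = 2} + card {x\<in>St \<union> Sv. c x = 3} + (k - 3)"
      by (rule CL[OF fS sS]) (use n1St n1Sv in auto)
    moreover have "card {x\<in>St \<union> Sv. c x = 2} \<le> 2" by (rule sub2[OF fSt sSt pSt fSv sSv pSv])
    moreover have "card {x\<in>St \<union> Sv. c x = 3} \<le> 2"
      by (rule sub2[OF fSt sSt pw_mono[OF pSt] fSv sSv pw_mono[OF pSv]]) simp_all
    ultimately show ?thesis using cU 3 by linarith
  qed
qed

lemma lower: "n + 1 \<le> k"
proof (cases "\<exists>u<n. c (Inl u) = 1")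
  case False then show ?thesis using caseI by auto
next
  case True
  then obtain u where u: "u < n" "c (Inl u) = 1" by auto
  show ?thesis
  proof (cases "2 \<le> card {x\<in>{..<n} - {u}. c (Inl x) \<noteq> 1}")
    case True then show ?thesis using caseII[OF u] by simp
  next
    case False then show ?thesis using caseIII[OF u] by simp
  qed
qed

end

lemma not_rw1_inr: "x \<noteq> y \<Longrightarrow> \<not> RW n m 1 (Inr x) (Inr y)"
  using GE_inr_inr by (simp add: reach_within.simps)

lemma upper: "\<exists>c. (\<forall>v\<in>GV n m. c v \<in> {1..n+1}) \<and>
       (\<forall>i\<in>{1..n+1}. is_packing (GV n m) (GE n m) i {v\<in>GV n m. c v = i})"
proof -
  define c0 :: "nat + nat set \<times> nat \<Rightarrow> nat" where "c0 x = (case x of Inl a \<Rightarrow> a + 2 | Inr _ \<Rightarrow> 1)" for x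
  have A: "\<forall>v\<in>GV n m. c0 v \<in> {1..n+1}"
  proof
    fix v assume "v \<in> GV n m"
    then show "c0 v \<in> {1..n+1}" using GV_cases[of v n m] by (auto simp: c0_def)
  qed
  have B: "is_packing (GV n m) (GE n m) i {v\<in>GV n m. c0 v = i}" if "i \<in> {1..n+1}" for i
    unfolding is_packing_def
  proof (intro conjI ballI impI)
    show "{v \<in> GV n m. c0 v = i} \<subseteq> GV n m" by auto
  next
    fix x y assume x: "x \<in> {v \<in> GV n m. c0 v = i}" and y: "y \<in> {v \<in> GV n m. c0 v = i}" and ne: "x \<noteq> y"
    show "enat i < gdist (GV n m) (GE n m) x y"
      unfolding gdist_gt_iff
    proof (cases "i = 1")
      case True
      then obtain x' y' where "x = Inr x'" "y = Inr y'" using x y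
        by (cases x; cases y; auto simp: c0_def)
      then show "\<not> RW n m i x y" using not_rw1_inr ne True by auto
    next
      case False
      then obtain a b where "x = Inl a" "y = Inl b" using x y
        by (cases x; cases y; auto simp: c0_def)
      then show "\<not> RW n m i x y" using x y ne by (auto simp: c0_def)
    qed
  qed
  show ?thesis using A B by blast
qed

theorem corollary1:
  fixes n m :: nat
  assumes "n \<ge> 3" and "m \<ge> 1"
  shows "packing_chromatic (fssd_verts (K_verts n) (K_adj n) m)
                           (fssd_adj (K_verts n) (K_adj n) m) = n + 1"
  unfolding packing_chromatic_def GV_def[symmetric] GE_def[symmetric]
proof (rule Least_equality)
  show "\<exists>c. (\<forall>v\<in>GV n m. c v \<in> {1..n+1}) \<and>
       (\<forall>i\<in>{1..n+1}. is_packing (GV n m) (GE n m) i {v\<in>GV n m. c v = i})" by (rule upper)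
next
  fix k assume "\<exists>c. (\<forall>v\<in>GV n m. c v \<in> {1..k}) \<and>
       (\<forall>i\<in>{1..k}. is_packing (GV n m) (GE n m) i {v\<in>GV n m. c v = i})"
  then obtain c where "\<forall>v\<in>GV n m. c v \<in> {1..k}"
       "\<forall>i\<in>{1..k}. is_packing (GV n m) (GE n m) i {v\<in>GV n m. c v = i}" by blast
  then interpret colr n m k c using assms by unfold_locales
  show "n + 1 \<le> k" by (rule lower)
qed

end
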